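(* Let $s\geq1$ be an integer, $\alpha'>1>\alpha>0$ and $\theta_1,\theta_2>0$. If $X$ has distribution $W(\alpha',\theta_1)$ and $Y$ has distribution $W(\alpha,\theta_2)$, then $X\leq_{s\text{-IFR}}Y$, i.e. the $W(\alpha',\theta_1)$ distribution is more $s$-IFR than the $W(\alpha,\theta_2)$ distribution.
   Context: $W(\alpha,\theta)$ denotes the Weibull distribution with shape parameter $\alpha$ and scale parameter $\theta$, whose tail is $e^{-(x/\theta)^\alpha}$, $x\geq0$. For a nonnegative random variable $X$ with density $f_X$: $\overline{T}_{X,0}=f_X$, $\widetilde{\mu}_{X,0}=1$, and for $s\geq1$, $x\geq0$, $\overline{T}_{X,s}(x)=\frac{1}{\widetilde{\mu}_{X,s-1}}\int_x^\infty \overline{T}_{X,s-1}(t)\,dt$ with $\widetilde{\mu}_{X,s}=\int_0^\infty \overline{T}_{X,s}(t)\,dt$, and $\overline{T}_{X,s}(x)=1$ for $x<0$. We write $X\leq_{s\text{-IFR}}Y$ ("$X$ is more $s$-IFR than $Y$") if $c_s(x)=\overline{T}_{Y,s}^{-1}(\overline{T}_{X,s}(x))$ is convex. *)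

theory Defs
  imports "HOL-Analysis.Analysis"
begin

definition weibull_density :: "real \<Rightarrow> real \<Rightarrow> real \<Rightarrow> real" where
  "weibull_density \<alpha> \<theta> x =
     (if x > 0 then (\<alpha> / \<theta>) * (x / \<theta>) powr (\<alpha> - 1) * exp (- ((x / \<theta>) powr \<alpha>)) else 0)"

fun iter_tail :: "(real \<Rightarrow> real) \<Rightarrow> nat \<Rightarrow> real \<Rightarrow> real"
  and iter_mu :: "(real \<Rightarrow> real) \<Rightarrow> nat \<Rightarrow> real" where
  "iter_tail f 0 x = f x"
| "iter_tail f (Suc s) x =
     (if x < 0 then 1
      else (LBINT t:{x..}. iter_tail f s t) / iter_mu f s)"
| "iter_mu f 0 = 1"
| "iter_mu f (Suc s) = (LBINT t:{0..}. iter_tail f (Suc s) t)"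

definition c_fun :: "(real \<Rightarrow> real) \<Rightarrow> (real \<Rightarrow> real) \<Rightarrow> nat \<Rightarrow> real \<Rightarrow> real" where
  "c_fun fX fY s x = the_inv_into {0..} (iter_tail fY s) (iter_tail fX s x)"

definition s_IFR_le :: "nat \<Rightarrow> (real \<Rightarrow> real) \<Rightarrow> (real \<Rightarrow> real) \<Rightarrow> bool" where
  "s_IFR_le s fX fY \<longleftrightarrow> convex_on {0..} (c_fun fX fY s)"

end

theory Submission
  imports Defs "HOL-Real_Asymp.Real_Asymp"
begin

lemma si_Ioi_Ici: fixes f :: "real \<Rightarrow> real"
  shows "set_integrable lborel {x..} f \<longleftrightarrow> set_integrable lborel {x<..} f"
  by (rule set_integrable_discrete_difference[where X="{x}"]) auto

lemma int_Ioi_Ici: fixes f :: "real \<Rightarrow> real"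
  shows "(LBINT t:{x..}. f t) = (LBINT t:{x<..}. f t)"
  by (rule set_integral_discrete_difference[where X="{x}"]) auto

lemma wF_deriv: fixes a th t :: real assumes "a>0" "th>0" "t>0"
  shows "((\<lambda>t. - exp (-((t/th) powr a))) has_real_derivative weibull_density a th t) (at t)"
proof -
  have "((\<lambda>t. - exp (-((t/th) powr a))) has_real_derivative
     exp (-((t/th) powr a)) * (a * (t/th) powr (a - 1) * (1/th))) (at t)"
    using assms by (auto intro!: derivative_eq_intros)
  then show ?thesis using assms unfolding weibull_density_def by (simp add: field_simps)
qed

lemma weib_tail:
  fixes a th x :: real assumes a: "a>0" and th: "th>0" and x: "x \<ge> 0"
  shows "set_integrable lborel {x..} (weibull_density a th)"
    "(LBINT t:{x..}. weibull_density a th t) = exp (-((x/th) powr a))"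
proof -
  let ?F = "\<lambda>t::real. - exp (-((t/th) powr a))"
  have lt: "((?F \<circ> real_of_ereal) \<longlongrightarrow> 0) (at_left \<infinity>)"
    unfolding ereal_tendsto_simps using a th by real_asymp
  have lx: "((?F \<circ> real_of_ereal) \<longlongrightarrow> ?F x) (at_right (ereal x))"
    unfolding ereal_tendsto_simps
  proof (cases "x = 0")
    case True then show "(?F \<longlongrightarrow> ?F x) (at_right x)" using a th by simp real_asymp
  next
    case False then have "x > 0" using x by simp
    then have "isCont ?F x" using a th by (auto intro!: continuous_intros)
    then show "(?F \<longlongrightarrow> ?F x) (at_right x)"
      by (simp add: isCont_def filterlim_at_split)
  qed
  have cont: "isCont (weibull_density a th) t" if "t > 0" for t
  proof -
    have c1: "isCont (\<lambda>t. (a / th) * (t / th) powr (a - 1) * exp (- ((t / th) powr a))) t"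
      using that th by (auto intro!: continuous_intros)
    moreover have ev: "\<forall>\<^sub>F u in nhds t. weibull_density a th u = (a / th) * (u / th) powr (a - 1) * exp (- ((u / th) powr a))"
      using eventually_nhds_in_open[of "{0<..}" t] that
      by (auto simp: weibull_density_def elim!: eventually_mono)
    ultimately show ?thesis using isCont_cong[OF ev] c1 by simp
  qed
  have nn: "weibull_density a th t \<ge> 0" for t
    using a th by (auto simp: weibull_density_def)
  have ass: "ereal x < \<infinity>" "\<And>t. ereal x < ereal t \<Longrightarrow> ereal t < \<infinity> \<Longrightarrow> DERIV ?F t :> weibull_density a th t"
    "\<And>t. ereal x < ereal t \<Longrightarrow> ereal t < \<infinity> \<Longrightarrow> isCont (weibull_density a th) t"
    "AE t in lborel. ereal x < ereal t \<longrightarrow> ereal t < \<infinity> \<longrightarrow> 0 \<le> weibull_density a th t"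
    using x a th by (auto intro!: wF_deriv cont simp: nn)
  note FTC = interval_integral_FTC_nonneg[OF ass lx lt]
  have e: "einterval (ereal x) \<infinity> = {x<..}" by (auto simp: einterval_def)
  have FI: "set_integrable lborel {x<..} (weibull_density a th)" using FTC(1) e by auto
  show si: "set_integrable lborel {x..} (weibull_density a th)"
    using FI si_Ioi_Ici by blast
  have "(LBINT t:{x..}. weibull_density a th t) = (LBINT t:{x<..}. weibull_density a th t)"
    by (rule int_Ioi_Ici)
  also have "\<dots> = exp (-((x/th) powr a))"
    using FTC(2) by (auto simp add: interval_integral_to_infinity_eq)
  finally show "(LBINT t:{x..}. weibull_density a th t) = exp (-((x/th) powr a))" .
qed

definition good :: "(real \<Rightarrow> real) \<Rightarrow> bool" where
  "good T \<longleftrightarrow> continuous_on {0..} T \<and> (\<forall>x\<ge>0. T x > 0) \<and> (\<forall>m::nat. \<exists>K. \<forall>x\<ge>0. (1+x)^m * T x \<le> K)"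

lemma sint_nonneg: fixes f :: "real \<Rightarrow> real"
  assumes "\<And>x. x \<in> A \<Longrightarrow> f x \<ge> 0" shows "(LBINT t:A. f t) \<ge> 0"
  unfolding set_lebesgue_integral_def using assms
  by (intro integral_nonneg_AE AE_I2) (auto simp: indicator_def)

lemma recip_sq_int: "set_integrable lborel {0..} (\<lambda>t::real. 1 / (1+t)^2)"
proof -
  let ?F = "\<lambda>t::real. - 1 / (1+t)"
  have lt: "((?F \<circ> real_of_ereal) \<longlongrightarrow> 0) (at_left \<infinity>)"
    unfolding ereal_tendsto_simps by real_asymp
  have lx: "((?F \<circ> real_of_ereal) \<longlongrightarrow> ?F 0) (at_right (ereal 0))"
    unfolding ereal_tendsto_simps by real_asymp
  have ass: "ereal 0 < \<infinity>" "\<And>t. ereal 0 < ereal t \<Longrightarrow> ereal t < \<infinity> \<Longrightarrow> DERIV ?F t :> 1 / (1+t)^2"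
    "\<And>t. ereal 0 < ereal t \<Longrightarrow> ereal t < \<infinity> \<Longrightarrow> isCont (\<lambda>t::real. 1 / (1+t)^2) t"
    "AE t in lborel. ereal 0 < ereal t \<longrightarrow> ereal t < \<infinity> \<longrightarrow> 0 \<le> 1 / (1+t)^2"
    by (auto intro!: derivative_eq_intros continuous_intros simp: power2_eq_square field_simps)
      (smt (verit, best) mult_pos_pos)
  note FTC = interval_integral_FTC_nonneg[OF ass lx lt]
  have e: "einterval (ereal 0) \<infinity> = {0<..}" by (auto simp: einterval_def)
  have FI: "set_integrable lborel {0<..} (\<lambda>t::real. 1 / (1+t)^2)" using FTC(1) e by auto
  then show ?thesis using si_Ioi_Ici by blast
qed

lemma good_int:
  assumes g: "good T" shows "set_integrable lborel {0..} (\<lambda>t. (1+t)^m * T t)"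
proof -
  from g obtain K where K: "\<And>x. x\<ge>0 \<Longrightarrow> (1+x)^(m+2) * T x \<le> K" unfolding good_def by blast
  have c: "continuous_on {0..} T" using g unfolding good_def by blast
  have pos: "\<And>x. x \<ge> 0 \<Longrightarrow> T x > 0" using g unfolding good_def by blast
  have KI: "set_integrable lborel {0..} (\<lambda>t::real. K * (1 / (1+t)^2))"
    using recip_sq_int by (rule set_integrable_mult_right)
  show ?thesis
  proof (rule set_integrable_bound[OF KI])
    show "set_borel_measurable lborel {0..} (\<lambda>t. (1 + t) ^ m * T t)"
      unfolding set_borel_measurable_def measurable_lborel2
      by (rule borel_measurable_continuous_on_indicator) (auto intro!: continuous_intros c)
    show "AE x in lborel. x \<in> {0..} \<longrightarrow> norm ((1 + x) ^ m * T x) \<le> norm (K * (1 / (1 + x)\<^sup>2))"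
    proof (rule AE_I2, rule impI)
      fix x :: real assume x: "x \<in> {0..}"
      then have x0: "x \<ge> 0" by simp
      have p: "(1+x)^m * T x \<ge> 0" using pos[OF x0] x0 by simp
      have "(1+x)^m * T x * (1+x)^2 = (1+x)^(m+2) * T x" by (simp add: power_add power2_eq_square)
      also have "\<dots> \<le> K" using K[OF x0] .
      finally have "(1+x)^m * T x \<le> K / (1+x)^2" using x0 by (simp add: field_simps)
      moreover have "K / (1+x)^2 \<le> \<bar>K\<bar> / (1+x)^2" using x0 by (simp add: divide_right_mono)
      ultimately have "norm ((1 + x) ^ m * T x) \<le> norm (K * (1 / (1 + x)\<^sup>2))" using p by simp
      then show "norm ((1 + x) ^ m * T x) \<le> norm (K * (1 / (1 + x)\<^sup>2))" .
    qed
  qed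
qed

lemma good_int0: assumes "good T" shows "set_integrable lborel {0..} T"
  using good_int[OF assms, of 0] by simp

definition Gt :: "(real \<Rightarrow> real) \<Rightarrow> real \<Rightarrow> real" where
  "Gt T x = (LBINT t:{x..}. T t)"

lemma good_cont: "good T \<Longrightarrow> continuous_on {0..} T" unfolding good_def by blast
lemma good_pos: "good T \<Longrightarrow> x \<ge> 0 \<Longrightarrow> T x > 0" unfolding good_def by blast

lemma good_int_sub: "good T \<Longrightarrow> x \<ge> 0 \<Longrightarrow> set_integrable lborel {x..} T"
  by (rule set_integrable_subset[OF good_int0]) auto

lemma G_split:
  assumes g: "good T" and x: "x \<ge> 0"
  shows "Gt T 0 = (LBINT t=ereal 0..ereal x. T t) + Gt T x"
proof -
  have I: "set_integrable lborel {0..} T" by (rule good_int0[OF g])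
  have "{0..} = {0..x} \<union> {x<..}" using x by auto
  then have "Gt T 0 = (LBINT t:{0..x} \<union> {x<..}. T t)" unfolding Gt_def by simp
  also have "\<dots> = (LBINT t:{0..x}. T t) + (LBINT t:{x<..}. T t)"
    by (rule set_integral_Un) (use x in \<open>auto intro!: set_integrable_subset[OF I]\<close>)
  also have "(LBINT t:{x<..}. T t) = Gt T x" unfolding Gt_def by (rule int_Ioi_Ici[symmetric])
  also have "(LBINT t:{0..x}. T t) = (LBINT t=ereal 0..ereal x. T t)"
    using x by (simp add: interval_integral_Icc)
  finally show ?thesis .
qed

lemma G_split':
  assumes g: "good T" and x: "x \<ge> 0"
  shows "Gt T 0 - (LBINT t=ereal 0..ereal x. T t) = Gt T x"
  using G_split[OF g x] by simp

lemma G_deriv_within: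
  assumes g: "good T" and x: "x \<ge> 0"
  shows "((\<lambda>u. Gt T 0 - (LBINT t=ereal 0..ereal u. T t)) has_real_derivative - T x) (at x within {0..x+1})"
proof -
  have "((\<lambda>u. LBINT y=ereal 0..ereal u. T y) has_vector_derivative T x) (at x within {0..x+1})"
    by (rule interval_integral_FTC2) (use x in \<open>auto intro: continuous_on_subset[OF good_cont[OF g]]\<close>)
  then have "((\<lambda>u. LBINT y=ereal 0..ereal u. T y) has_real_derivative T x) (at x within {0..x+1})"
    by (simp add: has_real_derivative_iff_has_vector_derivative)
  then show ?thesis by (auto intro!: derivative_eq_intros)
qed

lemma G_deriv:
  assumes g: "good T" and x: "x > 0"
  shows "(Gt T has_real_derivative - T x) (at x)"
proof -
  have "interior {0..x+1} = {0<..<x+1}" by simp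
  then have "at x within {0..x+1} = at x" using x
    by (metis at_within_interior greaterThanLessThan_iff less_add_one)
  then have d: "((\<lambda>u. Gt T 0 - (LBINT t=ereal 0..ereal u. T t)) has_real_derivative - T x) (at x)"
    using G_deriv_within[OF g, of x] x by simp
  show ?thesis
    by (rule has_field_derivative_transform_within_open[OF d, of "{0<..}"])
       (use x in \<open>auto simp: G_split'[OF g]\<close>)
qed

lemma G_cont:
  assumes g: "good T"
  shows "continuous_on {0..} (Gt T)"
  unfolding continuous_on_def
proof (intro ballI)
  fix x :: real assume "x \<in> {0..}" then have x: "x \<ge> 0" by simp
  have "continuous (at x within {0..x+1}) (\<lambda>u. Gt T 0 - (LBINT t=ereal 0..ereal u. T t))"
    using G_deriv_within[OF g x] by (rule DERIV_continuous)
  moreover have "at x within {0..x+1} = at x within {0..}"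
    by (rule at_within_nhd[where S="{..<x+1}"]) auto
  ultimately have c: "((\<lambda>u. Gt T 0 - (LBINT t=ereal 0..ereal u. T t)) \<longlongrightarrow> Gt T 0 - (LBINT t=ereal 0..ereal x. T t)) (at x within {0..})"
    by (simp add: continuous_within)
  have "((\<lambda>u. Gt T 0 - (LBINT t=ereal 0..ereal u. T t)) \<longlongrightarrow> Gt T x) (at x within {0..})"
    using c G_split[OF g x] by simp
  then show "(Gt T \<longlongrightarrow> Gt T x) (at x within {0..})"
    by (rule Lim_transform_within[where d=1]) (auto simp: G_split'[OF g])
qed

lemma G_nonneg: assumes g: "good T" and x: "x \<ge> 0" shows "Gt T x \<ge> 0"
  unfolding Gt_def using x good_pos[OF g] by (intro sint_nonneg) (auto intro: less_imp_le)

lemma G_pos: assumes g: "good T" and x: "x \<ge> 0" shows "Gt T x > 0"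
proof -
  have "continuous_on {x..x+1} (Gt T)" using x by (auto intro: continuous_on_subset[OF G_cont[OF g]])
  moreover have "\<And>z. x < z \<Longrightarrow> z < x+1 \<Longrightarrow> Gt T differentiable (at z)"
    using x G_deriv[OF g] real_differentiable_def by (metis le_less_trans)
  ultimately obtain l z where z: "x < z" "z < x+1" "DERIV (Gt T) z :> l" "Gt T (x+1) - Gt T x = (x+1-x) * l"
    using MVT[of x "x+1" "Gt T"] by auto
  have "l = - T z" using DERIV_unique[OF z(3) G_deriv[OF g]] x z by auto
  moreover have "T z > 0" using good_pos[OF g] x z by auto
  moreover have "Gt T (x+1) \<ge> 0" using G_nonneg[OF g] x by auto
  ultimately show ?thesis using z(4) by simp
qed

lemma G_decay: assumes g: "good T" and x: "x \<ge> 0"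
  shows "(1+x)^m * Gt T x \<le> (LBINT t:{0..}. (1+t)^m * T t)"
proof -
  have I: "set_integrable lborel {0..} (\<lambda>t. (1+t)^m * T t)" by (rule good_int[OF g])
  have Ix: "set_integrable lborel {x..} (\<lambda>t. (1+t)^m * T t)"
    by (rule set_integrable_subset[OF I]) (use x in auto)
  have "(1+x)^m * Gt T x = (LBINT t:{x..}. (1+x)^m * T t)" unfolding Gt_def by simp
  also have "\<dots> \<le> (LBINT t:{x..}. (1+t)^m * T t)"
  proof (rule set_integral_mono)
    show "set_integrable lborel {x..} (\<lambda>t. (1 + x) ^ m * T t)"
      using good_int_sub[OF g x] by (rule set_integrable_mult_right)
    show "set_integrable lborel {x..} (\<lambda>t. (1 + t) ^ m * T t)" by (rule Ix)
    fix t assume "t \<in> {x..}"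
    then have t: "x \<le> t" by simp
    then have "(1+x)^m \<le> (1+t)^m" using x by (intro power_mono) auto
    then show "(1 + x) ^ m * T t \<le> (1 + t) ^ m * T t"
      using good_pos[OF g, of t] t x by (intro mult_right_mono) auto
  qed
  also have "\<dots> \<le> (LBINT t:{0..<x}. (1+t)^m * T t) + (LBINT t:{x..}. (1+t)^m * T t)"
    using good_pos[OF g]
    by (smt (verit, del_insts) atLeastLessThan_iff less_imp_le mult_nonneg_nonneg sint_nonneg zero_le_power)
  also have "\<dots> = (LBINT t:{0..<x} \<union> {x..}. (1+t)^m * T t)"
    by (rule set_integral_Un[symmetric]) (auto intro!: set_integrable_subset[OF I] Ix)
  also have "{0..<x} \<union> {x..} = {0..}" using x by auto
  finally show ?thesis .
qed

lemma next_good: assumes g: "good T" shows "good (\<lambda>x. Gt T x / Gt T 0)"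
  unfolding good_def
proof (intro conjI allI impI)
  have p0: "Gt T 0 > 0" using G_pos[OF g] by simp
  show "continuous_on {0..} (\<lambda>x. Gt T x / Gt T 0)"
    using G_cont[OF g] p0 by (auto intro!: continuous_intros)
  show "\<And>x. 0 \<le> x \<Longrightarrow> 0 < Gt T x / Gt T 0" using G_pos[OF g] p0 by simp
  fix m :: nat
  show "\<exists>K. \<forall>x\<ge>0. (1 + x) ^ m * (Gt T x / Gt T 0) \<le> K"
  proof (intro exI[of _ "(LBINT t:{0..}. (1+t)^m * T t) / Gt T 0"] allI impI)
    fix x :: real assume x: "x \<ge> 0"
    have "(1 + x) ^ m * (Gt T x / Gt T 0) = ((1 + x) ^ m * Gt T x) / Gt T 0" by simp
    also have "\<dots> \<le> (LBINT t:{0..}. (1+t)^m * T t) / Gt T 0"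
      using G_decay[OF g x, of m] p0 by (intro divide_right_mono) auto
    finally show "(1 + x) ^ m * (Gt T x / Gt T 0) \<le> (LBINT t:{0..}. (1+t)^m * T t) / Gt T 0" .
  qed
qed

lemma shift_int:
  fixes f :: "real \<Rightarrow> real"
  assumes I: "set_integrable lborel {z..} f"
  shows "set_integrable lborel {0..} (\<lambda>u. f (z+u))"
    "(LBINT u:{0..}. f (z+u)) = (LBINT t:{z..}. f t)"
proof -
  let ?F = "\<lambda>t. indicator {z..} t *\<^sub>R f t"
  have e: "(\<lambda>u. ?F (z + 1 * u)) = (\<lambda>u. indicator {0..} u *\<^sub>R f (z+u))"
    by (auto simp: indicator_def)
  have "integrable lborel ?F" using I unfolding set_integrable_def .
  from lborel_integrable_real_affine[OF this, of 1 z] show "set_integrable lborel {0..} (\<lambda>u. f (z+u))"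
    unfolding set_integrable_def e by simp
  have "integral\<^sup>L lborel ?F = \<bar>1\<bar> *\<^sub>R integral\<^sup>L lborel (\<lambda>u. ?F (z + 1 * u))"
    by (rule lborel_integral_real_affine) simp
  then show "(LBINT u:{0..}. f (z+u)) = (LBINT t:{z..}. f t)"
    unfolding set_lebesgue_integral_def e by simp
qed

definition hz :: "real \<Rightarrow> (real \<Rightarrow> real) \<Rightarrow> (real \<Rightarrow> real) \<Rightarrow> bool" where
  "hz \<sigma> T h \<longleftrightarrow> (\<forall>x>0. (T has_real_derivative -(h x * T x)) (at x)) \<and> (\<forall>x>0. h x > 0)
     \<and> (\<forall>x y. 0 < x \<longrightarrow> x \<le> y \<longrightarrow> \<sigma> * h x \<le> \<sigma> * h y)"

lemma ratio:
  assumes g: "good T" and hz: "hz \<sigma> T h" and sg: "\<sigma> = 1 \<or> \<sigma> = -1"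
    and x: "0 \<le> x" and xy: "x \<le> y" and t: "0 \<le> t"
  shows "\<sigma> * (T (y+t) * T x) \<le> \<sigma> * (T (x+t) * T y)"
proof -
  define k where "k z = - \<sigma> * (ln (T (z+t)) - ln (T z))" for z
  have pos: "\<And>z. z \<ge> 0 \<Longrightarrow> T z > 0" using good_pos[OF g] .
  have D: "(T has_real_derivative -(h z * T z)) (at z)" if "z > 0" for z
    using hz that unfolding hz_def by blast
  have "k x \<le> k y"
  proof (rule DERIV_nonneg_imp_increasing_open[OF xy])
    fix z assume z: "x < z" "z < y"
    then have z0: "z > 0" "z + t > 0" using x t by auto
    have d1: "((\<lambda>z. ln (T (z+t))) has_real_derivative inverse (T (z+t)) * (-(h (z+t) * T (z+t)))) (at z)"
      by (rule DERIV_chain2[OF DERIV_ln[OF pos[of "z+t"]] DERIV_shift[THEN iffD1, OF D[of "z+t"]]])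
         (use z0 in auto)
    have d2: "((\<lambda>z. ln (T z)) has_real_derivative inverse (T z) * (-(h z * T z))) (at z)"
      by (rule DERIV_chain2[OF DERIV_ln[OF pos[of "z"]] D[of z]]) (use z0 in auto)
    have "(k has_real_derivative - \<sigma> * ((-(h (z+t) * T (z+t))) / T (z+t) - (-(h z * T z)) / T z)) (at z)"
      unfolding k_def using DERIV_cmult[OF DERIV_diff[OF d1 d2], of "-\<sigma>"]
      by (simp add: divide_inverse mult.commute)
    moreover have "- \<sigma> * ((-(h (z+t) * T (z+t))) / T (z+t) - (-(h z * T z)) / T z) = \<sigma> * h (z+t) - \<sigma> * h z"
      using pos[of z] pos[of "z+t"] z0 by (simp add: field_simps)
    moreover have "\<sigma> * h z \<le> \<sigma> * h (z+t)" using hz z0 t unfolding hz_def by auto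
    ultimately show "\<exists>y. (k has_real_derivative y) (at z) \<and> 0 \<le> y" by force
  next
    have "continuous_on {x..y} T" by (rule continuous_on_subset[OF good_cont[OF g]]) (use x in auto)
    moreover have "continuous_on {x..y} (\<lambda>z. T (z+t))"
      by (rule continuous_on_compose2[OF good_cont[OF g]]) (use x t in \<open>auto intro!: continuous_intros\<close>)
    ultimately show "continuous_on {x..y} k" unfolding k_def using pos x t
      by (auto intro!: continuous_intros) (metis add_nonneg_nonneg less_irrefl order_trans, metis less_irrefl order_trans)
  qed
  then have K1: "\<sigma> * (ln (T (y+t)) - ln (T y)) \<le> \<sigma> * (ln (T (x+t)) - ln (T x))" unfolding k_def by simp
  have L: "\<sigma> * ln (T (y+t) * T x) \<le> \<sigma> * ln (T (x+t) * T y)"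
  proof -
    have "T x > 0" "T y > 0" "T (x+t) > 0" "T (y+t) > 0" using pos x xy t by auto
    then show ?thesis using K1 by (simp add: ln_mult algebra_simps)
  qed
  have p1: "T (y+t) * T x > 0" "T (x+t) * T y > 0" using pos x xy t by auto
  from sg show ?thesis
  proof
    assume "\<sigma> = 1" then show ?thesis using L p1 by simp
  next
    assume "\<sigma> = -1" then show ?thesis using L p1 by simp
  qed
qed

lemma next_hz:
  assumes g: "good T" and hz: "hz \<sigma> T h" and sg: "\<sigma> = 1 \<or> \<sigma> = -1"
  shows "hz \<sigma> (\<lambda>x. Gt T x / Gt T 0) (\<lambda>x. T x / Gt T x)"
  unfolding hz_def
proof (intro conjI allI impI)
  have p0: "Gt T 0 > 0" using G_pos[OF g] by simp
  fix x :: real assume x: "x > 0"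
  have px: "Gt T x > 0" "T x > 0" using G_pos[OF g] good_pos[OF g] x by auto
  have "((\<lambda>x. Gt T x / Gt T 0) has_real_derivative (- T x) / Gt T 0) (at x)"
    by (rule DERIV_cdivide[OF G_deriv[OF g x]])
  moreover have "(- T x) / Gt T 0 = - (T x / Gt T x * (Gt T x / Gt T 0))" using px p0 by simp
  ultimately show "((\<lambda>x. Gt T x / Gt T 0) has_real_derivative - (T x / Gt T x * (Gt T x / Gt T 0))) (at x)"
    by metis
  show "T x / Gt T x > 0" using px by simp
next
  fix x y :: real assume x: "0 < x" and xy: "x \<le> y"
  have px: "Gt T x > 0" "T x > 0" "Gt T y > 0" "T y > 0" using G_pos[OF g] good_pos[OF g] x xy by auto
  have Gs: "Gt T z = (LBINT u:{0..}. T (z+u))" "set_integrable lborel {0..} (\<lambda>u. T (z+u))"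
    if "z \<ge> 0" for z
    using shift_int[OF good_int_sub[OF g that]] unfolding Gt_def by auto
  have I1: "set_integrable lborel {0..} (\<lambda>u. \<sigma> * (T (y+u) * T x))"
    using Gs(2)[of y] x xy by (intro set_integrable_mult_right set_integrable_mult_left) auto
  have I2: "set_integrable lborel {0..} (\<lambda>u. \<sigma> * (T (x+u) * T y))"
    using Gs(2)[of x] x xy by (intro set_integrable_mult_right set_integrable_mult_left) auto
  have "\<sigma> * (Gt T y * T x) = (LBINT u:{0..}. \<sigma> * (T (y+u) * T x))"
    using Gs(1)[of y] x xy by simp
  also have "\<dots> \<le> (LBINT u:{0..}. \<sigma> * (T (x+u) * T y))"
    by (rule set_integral_mono[OF I1 I2]) (use ratio[OF g hz sg] x xy in auto)
  also have "\<dots> = \<sigma> * (Gt T x * T y)"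
    using Gs(1)[of x] x xy by simp
  finally have M: "\<sigma> * (Gt T y * T x) \<le> \<sigma> * (Gt T x * T y)" .
  from sg show "\<sigma> * (T x / Gt T x) \<le> \<sigma> * (T y / Gt T y)"
  proof
    assume s: "\<sigma> = 1"
    then show ?thesis using M px by (simp add: divide_simps mult.commute)
  next
    assume s: "\<sigma> = -1"
    then show ?thesis using M px by (simp add: divide_simps mult.commute)
  qed
qed

lemma bounded_Ici:
  fixes F :: "real \<Rightarrow> real"
  assumes c: "continuous_on {0..} F" and l: "(F \<longlongrightarrow> 0) at_top"
  shows "\<exists>K. \<forall>x\<ge>0. F x \<le> K"
proof -
  have "eventually (\<lambda>x. F x < 1) at_top" using l by (rule order_tendstoD) simp
  then obtain N where N: "\<And>x. x \<ge> N \<Longrightarrow> F x < 1" by (auto simp: eventually_at_top_linorder)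
  obtain x0 where x0: "x0 \<in> {0..max N 0}" "\<And>y. y \<in> {0..max N 0} \<Longrightarrow> F y \<le> F x0"
  proof -
    have "continuous_on {0..max N 0} F" by (rule continuous_on_subset[OF c]) auto
    from continuous_attains_sup[OF compact_Icc _ this] show ?thesis using that by auto
  qed
  show ?thesis
  proof (intro exI[of _ "max 1 (F x0)"] allI impI)
    fix x :: real assume "x \<ge> 0"
    show "F x \<le> max 1 (F x0)"
    proof (cases "x \<le> max N 0")
      case True then have "F x \<le> F x0" using x0(2) \<open>x \<ge> 0\<close> by simp
      then show ?thesis by linarith
    next
      case False then have "F x < 1" using N by simp
      then show ?thesis by linarith
    qed
  qed
qed

lemma base_good:
  fixes a th :: real assumes a: "a > 0" and th: "th > 0"
  shows "good (\<lambda>x. exp (-((x/th) powr a)))"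
  unfolding good_def
proof (intro conjI allI impI)
  show c: "continuous_on {0..} (\<lambda>x. exp (-((x/th) powr a)))"
  proof -
    have "continuous_on {0..} (\<lambda>x::real. (x/th) powr a)"
      by (rule continuous_on_powr') (use a th in \<open>auto intro!: continuous_intros\<close>)
    then show ?thesis by (intro continuous_on_exp continuous_on_minus)
  qed
  fix m :: nat
  have l: "((\<lambda>x. (1+x) powr (real m) * exp(-((x/th) powr a))) \<longlongrightarrow> 0) at_top"
    using a th by real_asymp
  have "continuous_on {0..} (\<lambda>x. (1+x) powr (real m) * exp(-((x/th) powr a)))"
    using c by (auto intro!: continuous_intros)
  from bounded_Ici[OF this l] obtain K where K: "\<And>x. x \<ge> 0 \<Longrightarrow> (1+x) powr (real m) * exp(-((x/th) powr a)) \<le> K"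
    by blast
  show "\<exists>K. \<forall>x\<ge>0. (1 + x) ^ m * exp (- ((x / th) powr a)) \<le> K"
    using K by (intro exI[of _ K]) (auto simp: powr_realpow)
next
  fix x :: real show "0 < exp (-((x/th) powr a))" by simp
qed

lemma base_hz:
  fixes a th \<sigma> :: real assumes a: "a > 0" and th: "th > 0" and s: "(\<sigma> = 1 \<and> a > 1) \<or> (\<sigma> = -1 \<and> a < 1)"
  shows "hz \<sigma> (\<lambda>x. exp (-((x/th) powr a))) (\<lambda>x. (a/th) * (x/th) powr (a-1))"
  unfolding hz_def
proof (intro conjI allI impI)
  fix x :: real assume x: "x > 0"
  have "((\<lambda>x. exp (-((x/th) powr a))) has_real_derivative
     exp (-((x/th) powr a)) * (- (a * (x/th) powr (a - 1) * (1/th)))) (at x)"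
    using x th by (auto intro!: derivative_eq_intros)
  then show "((\<lambda>x. exp (-((x/th) powr a))) has_real_derivative
     - ((a/th) * (x/th) powr (a-1) * exp (-((x/th) powr a)))) (at x)"
    by (simp add: field_simps)
  show "(a/th) * (x/th) powr (a-1) > 0" using x a th by simp
next
  fix x y :: real assume x: "0 < x" and xy: "x \<le> y"
  have xy': "x/th \<le> y/th" "0 < x/th" using xy th x by (auto simp: divide_right_mono)
  from s show "\<sigma> * (a / th * (x / th) powr (a - 1)) \<le> \<sigma> * (a / th * (y / th) powr (a - 1))"
  proof
    assume "\<sigma> = 1 \<and> a > 1"
    then show ?thesis using powr_mono2[of "a-1" "x/th" "y/th"] xy' a th
      by (auto intro!: mult_left_mono divide_right_mono)
  next
    assume "\<sigma> = -1 \<and> a < 1"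
    then show ?thesis using powr_mono2'[of "a-1" "x/th" "y/th"] xy' a th
      by (auto intro!: mult_left_mono divide_right_mono)
  qed
qed

lemma base_iter:
  fixes a th x :: real assumes a: "a > 0" and th: "th > 0" and x: "x \<ge> 0"
  shows "iter_tail (weibull_density a th) 1 x = exp (-((x/th) powr a))"
proof -
  have "iter_tail (weibull_density a th) 0 = weibull_density a th" by (rule ext) simp
  then show ?thesis using weib_tail(2)[OF a th x] x by simp
qed

lemma chain:
  assumes g1: "good T1" and h1: "hz \<sigma> T1 h1" and sg: "\<sigma> = 1 \<or> \<sigma> = -1" and t0: "T1 0 = 1"
    and it1: "\<And>x. x \<ge> 0 \<Longrightarrow> iter_tail f 1 x = T1 x"
  shows "\<exists>T h. good T \<and> hz \<sigma> T h \<and> T 0 = 1 \<and> (\<forall>x\<ge>0. iter_tail f (Suc n) x = T x)"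
proof (induction n)
  case 0 then show ?case using g1 h1 t0 it1 by auto
next
  case (Suc n)
  then obtain T h where T: "good T" "hz \<sigma> T h" "T 0 = 1" "\<And>x. x \<ge> 0 \<Longrightarrow> iter_tail f (Suc n) x = T x"
    by blast
  have p0: "Gt T 0 > 0" using G_pos[OF T(1)] by simp
  have eqG: "(LBINT t:{x..}. iter_tail f (Suc n) t) = Gt T x" if "x \<ge> 0" for x
    unfolding Gt_def by (rule set_lebesgue_integral_cong) (use that T(4) in auto)
  have mu: "iter_mu f (Suc n) = Gt T 0" using eqG[OF order_refl] by (metis iter_mu.simps(2))
  show ?case
  proof (intro exI conjI allI impI)
    show "good (\<lambda>x. Gt T x / Gt T 0)" by (rule next_good[OF T(1)])
    show "hz \<sigma> (\<lambda>x. Gt T x / Gt T 0) (\<lambda>x. T x / Gt T x)" by (rule next_hz[OF T(1) T(2) sg])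
    show "Gt T 0 / Gt T 0 = 1" using p0 by simp
    fix x :: real assume x: "x \<ge> 0"
    show "iter_tail f (Suc (Suc n)) x = Gt T x / Gt T 0"
      using x eqG[OF x] mu by (metis iter_tail.simps(2) not_le)
  qed
qed

lemma strict_dec:
  assumes g: "good T" and hz: "hz \<sigma> T h" and p: "0 \<le> p" and pq: "p < q"
  shows "T q < T p"
proof -
  have "continuous_on {p..q} T" by (rule continuous_on_subset[OF good_cont[OF g]]) (use p in auto)
  moreover have "\<And>z. p < z \<Longrightarrow> z < q \<Longrightarrow> T differentiable (at z)"
    using hz p unfolding hz_def real_differentiable_def by (meson le_less_trans)
  ultimately obtain l z where z: "p < z" "z < q" "DERIV T z :> l" "T q - T p = (q - p) * l"
    using MVT[OF pq, of T] by blast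
  have z0: "z > 0" using p z by simp
  have "l = -(h z * T z)" using DERIV_unique[OF z(3)] hz z0 unfolding hz_def by blast
  moreover have "h z > 0" "T z > 0" using hz z0 good_pos[OF g] unfolding hz_def by auto
  ultimately have "l < 0" by simp
  then show ?thesis using z(4) pq by (smt (verit) mult_pos_neg)
qed

lemma T_small:
  assumes g: "good T" and e: "e > 0"
  shows "\<exists>y\<ge>0. T y \<le> e"
proof -
  obtain K where K: "\<And>x. x \<ge> 0 \<Longrightarrow> (1+x)^1 * T x \<le> K" using g unfolding good_def by blast
  define y where "y = max 0 (K/e)"
  have y: "y \<ge> 0" "y \<ge> K / e" unfolding y_def by auto
  have "(1+y) * T y \<le> K" using K[OF y(1)] by simp
  moreover have "K \<le> e * (1 + y)" using y e by (simp add: field_simps)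
  ultimately have "(1+y) * T y \<le> (1+y) * e" by (simp add: algebra_simps)
  then have "T y \<le> e" using y by (smt (verit) mult_le_cancel_left_pos)
  then show ?thesis using y by blast
qed

lemma convex_Ici:
  fixes f f' :: "real \<Rightarrow> real"
  assumes c: "continuous_on {0..} f"
    and d: "\<And>x. x > 0 \<Longrightarrow> (f has_real_derivative f' x) (at x)"
    and m: "\<And>x y. 0 < x \<Longrightarrow> x \<le> y \<Longrightarrow> f' x \<le> f' y"
  shows "convex_on {0..} f"
proof (rule convex_on_linorderI)
  show "convex {0::real..}" by simp
next
  fix t x y :: real
  assume t: "t > 0" "t < 1"
  assume xy: "x \<in> {0..}" "y \<in> {0..}" "x < y"
  define z where "z = (1 - t) * x + t * y"
  from xy t have xz: "z > x" by (simp add: z_def algebra_simps)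
  have "y - z = (1 - t) * (y - x)" by (simp add: z_def algebra_simps)
  also from xy t have "\<dots> > 0" by (intro mult_pos_pos) simp_all
  finally have yz: "z < y" by simp
  have cc: "continuous_on {a..b} f" if "0 \<le> a" for a b
    by (rule continuous_on_subset[OF c]) (use that in auto)
  have dd: "f differentiable (at u)" if "0 < u" for u
    using d[OF that] real_differentiable_def by blast
  obtain l1 \<xi> where \<xi>: "x < \<xi>" "\<xi> < z" "DERIV f \<xi> :> l1" "f z - f x = (z - x) * l1"
    using MVT[OF xz cc] xy dd by (metis atLeast_iff le_less_trans)
  obtain l2 \<eta> where \<eta>: "z < \<eta>" "\<eta> < y" "DERIV f \<eta> :> l2" "f y - f z = (y - z) * l2"
    using MVT[OF yz cc] xy xz dd by (metis atLeast_iff le_less_trans less_imp_le order_le_less_trans)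
  have "\<xi> > 0" using xy \<xi> by auto
  then have l1: "l1 = f' \<xi>" using DERIV_unique[OF \<xi>(3) d] by blast
  have "\<eta> > 0" using xy \<xi> \<eta> by auto
  then have l2: "l2 = f' \<eta>" using DERIV_unique[OF \<eta>(3) d] by blast
  have "f' \<xi> \<le> f' \<eta>" using m \<xi> \<eta> \<open>\<xi> > 0\<close> by auto
  then have "l1 \<le> l2" using l1 l2 by simp
  then have "(f z - f x) / (z - x) \<le> (f y - f z) / (y - z)"
    using \<xi>(4) \<eta>(4) xz yz by simp
  then have "(f y - f z) * (z - x) \<ge> (f z - f x) * (y - z)"
    using xz yz by (simp add: field_simps)
  also have "z - x = t * (y - x)" by (simp add: z_def algebra_simps)
  also have "y - z = (1 - t) * (y - x)" by (simp add: z_def algebra_simps)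
  finally have "(f y - f z) * t \<ge> (f z - f x) * (1 - t)" using xy by simp
  then show "(1 - t) * f x + t * f y \<ge> f ((1 - t) *\<^sub>R x + t *\<^sub>R y)"
    by (simp add: z_def algebra_simps)
qed

lemma phi_convex:
  assumes g: "good T" and hz: "hz \<sigma> T h"
  shows "convex_on {0..} (\<lambda>x. - \<sigma> * ln (T x))"
proof (rule convex_Ici)
  show "continuous_on {0..} (\<lambda>x. - \<sigma> * ln (T x))"
    using good_cont[OF g] good_pos[OF g] by (auto intro!: continuous_intros) (metis less_irrefl)
  fix x :: real assume x: "x > 0"
  have Tx: "T x > 0" using good_pos[OF g] x by simp
  have "((\<lambda>x. ln (T x)) has_real_derivative inverse (T x) * (-(h x * T x))) (at x)"
  proof -
    have dT: "(T has_real_derivative -(h x * T x)) (at x)" using hz x by (auto simp: hz_def)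
    show ?thesis by (rule DERIV_chain2[OF DERIV_ln[OF Tx] dT])
  qed
  then have "((\<lambda>x. - \<sigma> * ln (T x)) has_real_derivative - \<sigma> * (inverse (T x) * (-(h x * T x)))) (at x)"
    by (rule DERIV_cmult)
  moreover have "- \<sigma> * (inverse (T x) * (-(h x * T x))) = \<sigma> * h x" using Tx by (simp add: field_simps)
  ultimately show "((\<lambda>x. - \<sigma> * ln (T x)) has_real_derivative \<sigma> * h x) (at x)" by metis
next
  fix x y :: real assume "0 < x" "x \<le> y"
  then show "\<sigma> * h x \<le> \<sigma> * h y" using hz unfolding hz_def by blast
qed

lemma main_convex:
  assumes gX: "good TX" and hX: "hz 1 TX hX" and X0: "TX 0 = 1"
    and gY: "good TY" and hY: "hz (-1) TY hY" and Y0: "TY 0 = 1"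
    and eX: "\<And>x. x \<ge> 0 \<Longrightarrow> FX x = TX x" and eY: "\<And>x. x \<ge> 0 \<Longrightarrow> FY x = TY x"
  shows "convex_on {0..} (\<lambda>x. the_inv_into {0..} FY (FX x))"
proof -
  have inj: "inj_on FY {0..}"
  proof (rule inj_onI)
    fix p q :: real assume pq: "p \<in> {0..}" "q \<in> {0..}" "FY p = FY q"
    then have e: "TY p = TY q" using eY by simp
    show "p = q"
    proof (rule ccontr)
      assume "p \<noteq> q"
      then have "p < q \<or> q < p" by linarith
      then show False using strict_dec[OF gY hY] pq e by force
    qed
  qed
  have ex: "\<exists>z\<ge>0. TY z = TX x" if x: "x \<ge> 0" for x
  proof -
    have px: "TX x > 0" using good_pos[OF gX x] .
    have le1: "TX x \<le> 1"
    proof (cases "x = 0")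
      case True then show ?thesis using X0 by simp
    next
      case False then show ?thesis using strict_dec[OF gX hX order_refl, of x] x X0 by simp
    qed
    obtain y where y: "y \<ge> 0" "TY y \<le> TX x" using T_small[OF gY px] by blast
    have "continuous_on {0..y} TY" by (rule continuous_on_subset[OF good_cont[OF gY]]) auto
    from IVT2'[OF y(2) _ y(1) this] le1 Y0 show ?thesis by auto
  qed
  define c where "c x = the_inv_into {0..} FY (FX x)" for x
  have cprop: "c x \<ge> 0 \<and> TY (c x) = TX x" if x: "x \<ge> 0" for x
  proof -
    obtain z where z: "z \<ge> 0" "TY z = TX x" using ex[OF x] by blast
    have "c x = z" unfolding c_def
      by (rule the_inv_into_f_eq[OF inj]) (use z x eX eY in auto)
    then show ?thesis using z by simp
  qed
  have cvX: "convex_on {0..} (\<lambda>x. - 1 * ln (TX x))" by (rule phi_convex[OF gX hX])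
  have cvY: "convex_on {0..} (\<lambda>x. - (-1) * ln (TY x))" by (rule phi_convex[OF gY hY])
  show ?thesis
    unfolding c_def[symmetric]
  proof (rule convex_onI)
    show "convex {0::real..}" by simp
    fix t p q :: real assume t: "0 < t" "t < 1" and p: "p \<in> {0..}" and q: "q \<in> {0..}"
    define z where "z = (1 - t) * p + t * q"
    define w where "w = (1 - t) * c p + t * c q"
    have p0: "p \<ge> 0" and q0: "q \<ge> 0" using p q by auto
    have z0: "z \<ge> 0" unfolding z_def using t p0 q0 by simp
    have cp: "c p \<ge> 0" "TY (c p) = TX p" using cprop[OF p0] by auto
    have cq: "c q \<ge> 0" "TY (c q) = TX q" using cprop[OF q0] by auto
    have cz: "c z \<ge> 0" "TY (c z) = TX z" using cprop[OF z0] by auto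
    have w0: "w \<ge> 0" unfolding w_def using t cp cq by simp
    have A: "- ln (TX z) \<le> (1 - t) * (- ln (TX p)) + t * (- ln (TX q))"
      using convex_onD[OF cvX, of t p q] t p q by (simp add: z_def)
    have B: "ln (TY w) \<le> (1 - t) * ln (TY (c p)) + t * ln (TY (c q))"
      using convex_onD[OF cvY, of t "c p" "c q"] t cp cq by (simp add: w_def)
    have "ln (TY w) \<le> ln (TY (c z))" using A B cp cq cz by simp
    moreover have "TY w > 0" using good_pos[OF gY w0] .
    moreover have "TY (c z) > 0" using good_pos[OF gY cz(1)] .
    ultimately have "TY w \<le> TY (c z)" by simp
    then have "c z \<le> w" using strict_dec[OF gY hY w0, of "c z"] by linarith
    then show "c ((1 - t) *\<^sub>R p + t *\<^sub>R q) \<le> (1 - t) * c p + t * c q"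
      by (simp add: z_def w_def)
  qed
qed

theorem proposition4:
  fixes s :: nat and \<alpha> \<alpha>' \<theta>1 \<theta>2 :: real
  assumes "s \<ge> 1" and "\<alpha>' > 1" and "1 > \<alpha>" and "\<alpha> > 0"
    and "\<theta>1 > 0" and "\<theta>2 > 0"
  shows "s_IFR_le s (weibull_density \<alpha>' \<theta>1) (weibull_density \<alpha> \<theta>2)"
proof -
  obtain n where n: "s = Suc n" using assms(1) by (cases s) auto
  have a': "\<alpha>' > 0" using assms(2) by simp
  have cX: "\<exists>T h. good T \<and> hz 1 T h \<and> T 0 = 1 \<and> (\<forall>x\<ge>0. iter_tail (weibull_density \<alpha>' \<theta>1) (Suc n) x = T x)"
  proof -
    have s1: "((1::real) = 1 \<and> \<alpha>' > 1) \<or> ((1::real) = -1 \<and> \<alpha>' < 1)" using assms(2) by simp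
    have e0: "exp (-((0/\<theta>1) powr \<alpha>')) = 1" by simp
    show ?thesis
      by (rule chain[OF base_good[OF a' assms(5)] base_hz[OF a' assms(5) s1] _ e0 base_iter[OF a' assms(5)]]) simp_all
  qed
  then obtain TX hX where X: "good TX" "hz 1 TX hX" "TX 0 = 1"
      "\<forall>x\<ge>0. iter_tail (weibull_density \<alpha>' \<theta>1) (Suc n) x = TX x"
    by blast
  have cY: "\<exists>T h. good T \<and> hz (-1) T h \<and> T 0 = 1 \<and> (\<forall>x\<ge>0. iter_tail (weibull_density \<alpha> \<theta>2) (Suc n) x = T x)"
  proof -
    have s1: "((-1::real) = 1 \<and> \<alpha> > 1) \<or> ((-1::real) = -1 \<and> \<alpha> < 1)" using assms(3) by simp
    have e0: "exp (-((0/\<theta>2) powr \<alpha>)) = 1" by simp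
    show ?thesis
      by (rule chain[OF base_good[OF assms(4) assms(6)] base_hz[OF assms(4) assms(6) s1] _ e0 base_iter[OF assms(4) assms(6)]]) simp_all
  qed
  then obtain TY hY where Y: "good TY" "hz (-1) TY hY" "TY 0 = 1"
      "\<forall>x\<ge>0. iter_tail (weibull_density \<alpha> \<theta>2) (Suc n) x = TY x"
    by blast
  show ?thesis
    unfolding s_IFR_le_def c_fun_def n
    by (rule main_convex[OF X(1-3) Y(1-3)]) (use X(4) Y(4) in auto)
qed

end
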